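(* If a finite set $S\subset\mathbb{R}^3$ minimally surrounds the origin in $\mathbb{R}^3$, then either (i) $S$ is a critical tetrahedron, or (ii) $S$ is the union of two critical triangles sharing exactly one point, or (iii) $S$ is the disjoint union of a critical triangle and a critical segment, or (iv) $S$ consists of three disjoint critical segments.
   Context: A point set in $\mathbb{R}^d$ surrounds the origin if the origin lies in the interior of its convex hull; it minimally surrounds the origin if it surrounds the origin but no proper subset does. A point set $S$ surrounds the origin in a linear subspace $E$ if $S$ spans $E$ and the origin lies in the relative interior of $\mathrm{conv}(S)$. A $k$-simplex is a set of $k+1$ affinely independent points (segment, triangle, tetrahedron for $k=1,2,3$); a simplex $N$ is critical if it surrounds the origin in its linear hull. *)

theory Defs
  imports "HOL-Analysis.Analysis"
begin

definition surrounds :: "'a::euclidean_space set \<Rightarrow> bool" where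
  "surrounds S \<longleftrightarrow> 0 \<in> interior (convex hull S)"

definition minimally_surrounds :: "'a::euclidean_space set \<Rightarrow> bool" where
  "minimally_surrounds S \<longleftrightarrow> surrounds S \<and> (\<forall>T. T \<subset> S \<longrightarrow> \<not> surrounds T)"

definition surrounds_in :: "'a::euclidean_space set \<Rightarrow> 'a set \<Rightarrow> bool" where
  "surrounds_in S E \<longleftrightarrow> subspace E \<and> span S = E \<and> 0 \<in> rel_interior (convex hull S)"

definition is_simplex :: "nat \<Rightarrow> 'a::euclidean_space set \<Rightarrow> bool" where
  "is_simplex k N \<longleftrightarrow> finite N \<and> card N = k + 1 \<and> \<not> affine_dependent N"

definition critical_simplex :: "nat \<Rightarrow> 'a::euclidean_space set \<Rightarrow> bool" where
  "critical_simplex k N \<longleftrightarrow> is_simplex k N \<and> surrounds_in N (span N)"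

end

theory Submission
  imports Defs
begin

definition pd :: "'a::euclidean_space set \<Rightarrow> bool" where
  "pd U \<longleftrightarrow> (\<exists>c. (\<forall>x\<in>U. 0 < c x) \<and> (\<Sum>x\<in>U. c x *\<^sub>R x) = 0)"

lemma relint_union_sing:
  fixes S :: "'a::euclidean_space set"
  assumes "finite S"
  shows "rel_interior (convex hull S) =
    {sum (\<lambda>i. c i *\<^sub>R i) S | c. (\<forall>i\<in>S. c i > 0) \<and> sum c S = 1}"
proof -
  have e: "(\<Union>i\<in>S. {i}) = S" by auto
  have "rel_interior (convex hull (\<Union>i\<in>S. {i})) =
    {sum (\<lambda>i. c i *\<^sub>R s i) S | c s. (\<forall>i\<in>S. c i > 0) \<and> sum c S = 1 \<and>
      (\<forall>i\<in>S. s i \<in> rel_interior {i})}"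
    by (rule rel_interior_convex_hull_union) (use assms in auto)
  also have "\<dots> = {sum (\<lambda>i. c i *\<^sub>R i) S | c. (\<forall>i\<in>S. c i > 0) \<and> sum c S = 1}"
  proof -
    have "\<And>c s. (\<forall>i\<in>S. s i \<in> rel_interior {i}) \<Longrightarrow> sum (\<lambda>i. c i *\<^sub>R s i) S = sum (\<lambda>i. c i *\<^sub>R i) S"
      by (rule sum.cong) auto
    then show ?thesis by auto
  qed
  finally show ?thesis unfolding e .
qed

lemma relint0_iff:
  fixes S :: "'a::euclidean_space set"
  assumes "finite S" "S \<noteq> {}"
  shows "0 \<in> rel_interior (convex hull S) \<longleftrightarrow> pd S"
proof
  assume "0 \<in> rel_interior (convex hull S)"
  then show "pd S" unfolding relint_union_sing[OF assms(1)] pd_def by auto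
next
  assume "pd S"
  then obtain c where c: "\<forall>x\<in>S. 0 < c x" "(\<Sum>x\<in>S. c x *\<^sub>R x) = 0" unfolding pd_def by auto
  have sp: "sum c S > 0" using assms c by (intro sum_pos) auto
  define c' where "c' = (\<lambda>x. c x / sum c S)"
  have "\<forall>i\<in>S. c' i > 0" using c sp by (auto simp: c'_def)
  moreover have "sum c' S = 1" using sp by (simp add: c'_def sum_divide_distrib[symmetric])
  moreover have "(\<Sum>x\<in>S. c' x *\<^sub>R x) = 0"
  proof -
    have "(\<Sum>x\<in>S. c' x *\<^sub>R x) = (1 / sum c S) *\<^sub>R (\<Sum>x\<in>S. c x *\<^sub>R x)"
      by (simp add: c'_def scaleR_sum_right)
    then show ?thesis using c by simp
  qed
  ultimately show "0 \<in> rel_interior (convex hull S)"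
    unfolding relint_union_sing[OF assms(1)] by force
qed

lemma surr_iff:
  fixes S :: "'a::euclidean_space set"
  assumes "finite S"
  shows "surrounds S \<longleftrightarrow> span S = UNIV \<and> pd S"
proof
  assume "surrounds S"
  then have i: "0 \<in> interior (convex hull S)" unfolding surrounds_def .
  then obtain e where e: "e > 0" "ball 0 e \<subseteq> convex hull S"
    using mem_interior by blast
  have sp: "span S = UNIV"
  proof -
    have "x \<in> span S" for x
    proof (cases "x = 0")
      case True then show ?thesis by (simp add: span_zero)
    next
      case False
      define y where "y = (e / (2 * norm x)) *\<^sub>R x"
      have "norm y = e / 2" using False e by (simp add: y_def)
      then have "y \<in> ball 0 e" using e by simp
      then have "y \<in> span S" using e convex_hull_subset_span by blast
      then have "((2 * norm x) / e) *\<^sub>R y \<in> span S" by (rule span_mul)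
      moreover have "((2 * norm x) / e) *\<^sub>R y = x" using False e by (simp add: y_def)
      ultimately show ?thesis by simp
    qed
    then show ?thesis by auto
  qed
  have ne: "S \<noteq> {}" using sp by auto
  have "0 \<in> rel_interior (convex hull S)" using i interior_subset_rel_interior by blast
  then show "span S = UNIV \<and> pd S" using sp relint0_iff[OF assms ne] by simp
next
  assume a: "span S = UNIV \<and> pd S"
  have ne: "S \<noteq> {}" using a by auto
  have r: "0 \<in> rel_interior (convex hull S)" using a relint0_iff[OF assms ne] by simp
  then have "0 \<in> convex hull S" using rel_interior_subset by blast
  then have "0 \<in> affine hull S" using convex_hull_subset_affine_hull by blast
  then have "affine hull S = span S" by (rule affine_hull_span_0)
  then have "affine hull (convex hull S) = UNIV" using a by simp
  then show "surrounds S" unfolding surrounds_def using r rel_interior_interior by blast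
qed

lemma crit_intro:
  fixes N :: "'a::euclidean_space set"
  assumes "finite N" "card N = k + 1" "\<not> affine_dependent N" "pd N"
  shows "critical_simplex k N"
proof -
  have "N \<noteq> {}" using assms(2) by auto
  then show ?thesis using assms relint0_iff[OF assms(1)]
    unfolding critical_simplex_def is_simplex_def surrounds_in_def by auto
qed

lemma crit_pd:
  fixes N :: "'a::euclidean_space set"
  assumes "critical_simplex k N"
  shows "pd N" "finite N" "card N = k + 1" "\<not> affine_dependent N"
proof -
  show f: "finite N" "card N = k + 1" "\<not> affine_dependent N"
    using assms unfolding critical_simplex_def is_simplex_def by auto
  have "N \<noteq> {}" using f by auto
  then show "pd N" using assms relint0_iff[OF f(1)]
    unfolding critical_simplex_def is_simplex_def surrounds_in_def by auto
qed

lemma pd_comb: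
  fixes A B :: "'a::euclidean_space set"
  assumes "finite A" "finite B" "A \<inter> B = {}"
    "\<forall>x\<in>A. 0 < ca x" "\<forall>x\<in>B. 0 < cb x"
    "(\<Sum>x\<in>A. ca x *\<^sub>R x) + (\<Sum>x\<in>B. cb x *\<^sub>R x) = 0"
  shows "pd (A \<union> B)"
proof -
  define c where "c = (\<lambda>x. if x \<in> A then ca x else cb x)"
  have "(\<Sum>x\<in>A \<union> B. c x *\<^sub>R x) = (\<Sum>x\<in>A. c x *\<^sub>R x) + (\<Sum>x\<in>B. c x *\<^sub>R x)"
    using assms by (simp add: sum.union_disjoint)
  also have "(\<Sum>x\<in>A. c x *\<^sub>R x) = (\<Sum>x\<in>A. ca x *\<^sub>R x)"
    by (rule sum.cong) (auto simp: c_def)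
  also have "(\<Sum>x\<in>B. c x *\<^sub>R x) = (\<Sum>x\<in>B. cb x *\<^sub>R x)"
    using assms(3) by (intro sum.cong) (auto simp: c_def)
  finally have "(\<Sum>x\<in>A \<union> B. c x *\<^sub>R x) = 0" using assms(6) by simp
  moreover have "\<forall>x\<in>A \<union> B. 0 < c x" using assms by (auto simp: c_def)
  ultimately show ?thesis unfolding pd_def by blast
qed

lemma pd_union:
  fixes A B :: "'a::euclidean_space set"
  assumes "finite A" "finite B" "A \<inter> B = {}" "pd A" "pd B"
  shows "pd (A \<union> B)"
proof -
  obtain ca cb where "\<forall>x\<in>A. 0 < ca x" "(\<Sum>x\<in>A. ca x *\<^sub>R x) = 0"
     "\<forall>x\<in>B. 0 < cb x" "(\<Sum>x\<in>B. cb x *\<^sub>R x) = 0" using assms(4,5) unfolding pd_def by blast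
  then show ?thesis using pd_comb[OF assms(1-3)] by simp
qed

lemma pd2:
  fixes a b :: "'a::euclidean_space"
  assumes "a \<noteq> b" "\<alpha> > 0" "\<beta> > 0" "\<alpha> *\<^sub>R a + \<beta> *\<^sub>R b = 0"
  shows "pd {a,b}"
proof -
  define c where "c = (\<lambda>x. if x = a then \<alpha> else \<beta>)"
  have "(\<Sum>x\<in>{a,b}. c x *\<^sub>R x) = 0" using assms by (simp add: c_def)
  moreover have "\<forall>x\<in>{a,b}. 0 < c x" using assms by (auto simp: c_def)
  ultimately show ?thesis unfolding pd_def by blast
qed

lemma pd3:
  fixes a b d :: "'a::euclidean_space"
  assumes "a \<noteq> b" "a \<noteq> d" "b \<noteq> d" "\<alpha> > 0" "\<beta> > 0" "\<gamma> > 0"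
    "\<alpha> *\<^sub>R a + \<beta> *\<^sub>R b + \<gamma> *\<^sub>R d = 0"
  shows "pd {a,b,d}"
proof -
  define c where "c = (\<lambda>x. if x = a then \<alpha> else if x = b then \<beta> else \<gamma>)"
  have "(\<Sum>x\<in>{a,b,d}. c x *\<^sub>R x) = \<alpha> *\<^sub>R a + \<beta> *\<^sub>R b + \<gamma> *\<^sub>R d"
    using assms by (simp add: c_def algebra_simps)
  moreover have "\<forall>x\<in>{a,b,d}. 0 < c x" using assms by (auto simp: c_def)
  ultimately show ?thesis unfolding pd_def using assms(7) by metis
qed

lemma circ_step:
  fixes U :: "'a::euclidean_space set"
  assumes "finite U" "pd U" "s \<in> U" "affine_dependent U"
  shows "\<exists>U'. U' \<subset> U \<and> s \<in> U' \<and> pd U'"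
proof -
  obtain c where c: "\<forall>x\<in>U. 0 < c x" "(\<Sum>x\<in>U. c x *\<^sub>R x) = 0" using assms(2) unfolding pd_def by blast
  obtain d0 where d0: "sum d0 U = 0" "\<exists>v\<in>U. d0 v \<noteq> 0" "(\<Sum>v\<in>U. d0 v *\<^sub>R v) = 0"
    using assms(4) unfolding affine_dependent_explicit_finite[OF assms(1)] by blast
  obtain d where d: "sum d U = 0" "\<exists>v\<in>U. d v \<noteq> 0" "(\<Sum>v\<in>U. d v *\<^sub>R v) = 0" "d s \<ge> 0"
  proof (cases "d0 s \<ge> 0")
    case True then show ?thesis using d0 that by blast
  next
    case False
    have "sum (\<lambda>x. - d0 x) U = 0" using d0 by (simp add: sum_negf)
    moreover have "(\<Sum>v\<in>U. (- d0 v) *\<^sub>R v) = 0" using d0 by (simp add: sum_negf)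
    ultimately show ?thesis using d0 False that[of "\<lambda>x. - d0 x"] by auto
  qed
  define N where "N = {y\<in>U. d y < 0}"
  have N: "finite N" "N \<noteq> {}"
  proof -
    show "finite N" using assms(1) by (simp add: N_def)
    show "N \<noteq> {}"
    proof
      assume "N = {}"
      then have "\<forall>x\<in>U. 0 \<le> d x" by (force simp: N_def)
      then have "\<forall>x\<in>U. d x = 0" using d(1) sum_nonneg_eq_0_iff[OF assms(1)] by blast
      then show False using d(2) by blast
    qed
  qed
  define t where "t = Min ((\<lambda>y. c y / - d y) ` N)"
  have "t \<in> (\<lambda>y. c y / - d y) ` N" unfolding t_def using N by (intro Min_in) auto
  then obtain y0 where y0: "y0 \<in> N" "t = c y0 / - d y0" by blast
  have tle: "\<And>y. y \<in> N \<Longrightarrow> t \<le> c y / - d y" unfolding t_def using N by (intro Min_le) auto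
  define c' where "c' = (\<lambda>x. c x + t * d x)"
  have tpos: "t \<ge> 0" using y0 c by (auto simp: N_def divide_nonneg_neg)
  have nn: "\<forall>x\<in>U. 0 \<le> c' x"
  proof
    fix x assume x: "x \<in> U"
    show "0 \<le> c' x"
    proof (cases "d x < 0")
      case True
      then have "t \<le> c x / - d x" using tle x by (auto simp: N_def)
      then have "t * (- d x) \<le> c x" using True by (subst (asm) pos_le_divide_eq) auto
      then show ?thesis by (simp add: c'_def algebra_simps)
    next
      case False
      then have "0 \<le> t * d x" using tpos by simp
      then show ?thesis using c x by (simp add: c'_def add_nonneg_nonneg less_imp_le)
    qed
  qed
  have cy0: "c' y0 = 0" using y0 by (auto simp: c'_def N_def)
  define U' where "U' = {x\<in>U. 0 < c' x}"
  have "y0 \<in> U" "y0 \<notin> U'" using y0 cy0 by (auto simp: U'_def N_def)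
  then have "U' \<subset> U" by (auto simp: U'_def)
  moreover have "s \<in> U'"
  proof -
    have "0 \<le> t * d s" using tpos d(4) by simp
    then show ?thesis using c assms(3) by (auto simp: U'_def c'_def add_pos_nonneg)
  qed
  moreover have "pd U'"
  proof -
    have "(\<Sum>x\<in>U'. c' x *\<^sub>R x) = (\<Sum>x\<in>U. c' x *\<^sub>R x)"
    proof (rule sum.mono_neutral_left[OF assms(1)])
      show "U' \<subseteq> U" by (auto simp: U'_def)
      show "\<forall>i\<in>U - U'. c' i *\<^sub>R i = 0" using nn by (force simp: U'_def)
    qed
    also have "\<dots> = (\<Sum>x\<in>U. c x *\<^sub>R x) + t *\<^sub>R (\<Sum>x\<in>U. d x *\<^sub>R x)"
      by (simp add: c'_def scaleR_add_left sum.distrib scaleR_sum_right)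
    also have "\<dots> = 0" using c d by simp
    finally have "(\<Sum>x\<in>U'. c' x *\<^sub>R x) = 0" .
    moreover have "\<forall>x\<in>U'. 0 < c' x" by (simp add: U'_def)
    ultimately show ?thesis unfolding pd_def by blast
  qed
  ultimately show ?thesis by blast
qed

lemma circ:
  fixes S :: "'a::euclidean_space set"
  assumes "finite S" "pd S" "s \<in> S"
  shows "\<exists>V\<subseteq>S. s \<in> V \<and> pd V \<and> \<not> affine_dependent V"
proof -
  have "\<forall>U. U \<subseteq> S \<and> pd U \<and> s \<in> U \<and> card U = n \<longrightarrow> (\<exists>V\<subseteq>U. s \<in> V \<and> pd V \<and> \<not> affine_dependent V)" for n
  proof (induction n rule: less_induct)
    case (less n)
    show ?case
    proof (intro allI impI)
      fix U assume U: "U \<subseteq> S \<and> pd U \<and> s \<in> U \<and> card U = n"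
      have fU: "finite U" using U assms(1) finite_subset by blast
      show "\<exists>V\<subseteq>U. s \<in> V \<and> pd V \<and> \<not> affine_dependent V"
      proof (cases "affine_dependent U")
        case False then show ?thesis using U by (intro exI[of _ U]) simp
      next
        case True
        then obtain U' where U': "U' \<subset> U" "s \<in> U'" "pd U'" using circ_step[of U s] fU U by blast
        have "card U' < n" using U' U fU psubset_card_mono by metis
        moreover have "U' \<subseteq> S" using U U' by blast
        ultimately have "\<exists>V\<subseteq>U'. s \<in> V \<and> pd V \<and> \<not> affine_dependent V"
          using less.IH U' by blast
        then show ?thesis using U' by blast
      qed
    qed
  qed
  then show ?thesis using assms by blast
qed

lemma indep_minus:
  fixes V :: "'a::euclidean_space set"
  assumes "finite V" "pd V" "\<not> affine_dependent V" "v \<in> V"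
  shows "independent (V - {v})" "span (V - {v}) = span V"
proof -
  obtain c where c: "\<forall>x\<in>V. 0 < c x" "(\<Sum>x\<in>V. c x *\<^sub>R x) = 0" using assms(2) unfolding pd_def by blast
  have split: "(\<Sum>x\<in>V. g x) = g v + (\<Sum>x\<in>V - {v}. g x)" for g :: "'a \<Rightarrow> 'b::ab_group_add"
    using assms(1,4) by (simp add: sum.remove)
  have "c v *\<^sub>R v = - (\<Sum>x\<in>V - {v}. c x *\<^sub>R x)" using c(2) split[of "\<lambda>x. c x *\<^sub>R x"]
    by (simp add: eq_neg_iff_add_eq_0)
  moreover have "c v > 0" using c(1) assms(4) by blast
  then have "v = (1 / c v) *\<^sub>R (c v *\<^sub>R v)" by simp
  ultimately have "v = (- 1 / c v) *\<^sub>R (\<Sum>x\<in>V - {v}. c x *\<^sub>R x)"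
    by (metis divide_minus_left scaleR_minus_left scaleR_minus_right)
  moreover have "(\<Sum>x\<in>V - {v}. c x *\<^sub>R x) \<in> span (V - {v})"
    by (intro span_sum span_mul span_base) auto
  ultimately have "v \<in> span (V - {v})" by (metis span_mul)
  then have "span (insert v (V - {v})) = span (V - {v})" by (rule span_redundant)
  moreover have "insert v (V - {v}) = V" using assms(4) by blast
  ultimately show "span (V - {v}) = span V" by simp
  show "independent (V - {v})"
  proof
    assume "dependent (V - {v})"
    then obtain u where u: "\<exists>y\<in>V - {v}. u y \<noteq> 0" "(\<Sum>y\<in>V - {v}. u y *\<^sub>R y) = 0"
      using dependent_finite[of "V - {v}"] assms(1) by auto
    define t where "t = sum u (V - {v}) / sum c V"
    have sc: "sum c V > 0" using c assms(1,4) by (intro sum_pos) auto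
    define g where "g = (\<lambda>y. (if y = v then 0 else u y) - t * c y)"
    have "sum (\<lambda>y. if y = v then 0 else u y) V = 0 + sum (\<lambda>y. if y = v then 0 else u y) (V - {v})"
      using split[of "\<lambda>y. if y = v then 0 else u y"] by simp
    also have "\<dots> = sum u (V - {v})"
      using sum.cong[of "V - {v}" "V - {v}" "\<lambda>y. if y = v then 0 else u y" u] by auto
    finally have "sum g V = sum u (V - {v}) - t * sum c V"
      by (simp add: g_def sum_subtractf sum_distrib_left)
    also have "\<dots> = 0" using sc by (simp add: t_def)
    finally have g1: "sum g V = 0" .
    have "(\<Sum>y\<in>V. g y *\<^sub>R y) = (\<Sum>y\<in>V - {v}. g y *\<^sub>R y) + g v *\<^sub>R v"
      using split[of "\<lambda>y. g y *\<^sub>R y"] by simp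
    also have "(\<Sum>y\<in>V - {v}. g y *\<^sub>R y) = (\<Sum>y\<in>V - {v}. u y *\<^sub>R y) - t *\<^sub>R (\<Sum>y\<in>V - {v}. c y *\<^sub>R y)"
      by (simp add: g_def scaleR_diff_left sum_subtractf scaleR_sum_right)
    also have "g v *\<^sub>R v = - t *\<^sub>R (c v *\<^sub>R v)" by (simp add: g_def)
    finally have "(\<Sum>y\<in>V. g y *\<^sub>R y) = - t *\<^sub>R (c v *\<^sub>R v + (\<Sum>y\<in>V - {v}. c y *\<^sub>R y))"
      using u(2) by (simp add: algebra_simps)
    also have "c v *\<^sub>R v + (\<Sum>y\<in>V - {v}. c y *\<^sub>R y) = 0" using c(2) split[of "\<lambda>x. c x *\<^sub>R x"] by simp
    finally have g2: "(\<Sum>y\<in>V. g y *\<^sub>R y) = 0" by simp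
    have g3: "\<exists>y\<in>V. g y \<noteq> 0"
    proof (cases "t = 0")
      case True then show ?thesis using u(1) by (auto simp: g_def)
    next
      case False then show ?thesis using c assms(4) by (intro bexI[of _ v]) (auto simp: g_def)
    qed
    show False using assms(3) g1 g2 g3 affine_dependent_explicit_finite[OF assms(1)] by blast
  qed
qed

lemma aff_indep_of:
  fixes B :: "'a::euclidean_space set"
  assumes "finite B" "pd B" "x \<in> B" "independent (B - {x})"
  shows "\<not> affine_dependent B"
proof
  assume "affine_dependent B"
  then obtain d where d: "sum d B = 0" "\<exists>v\<in>B. d v \<noteq> 0" "(\<Sum>v\<in>B. d v *\<^sub>R v) = 0"
    unfolding affine_dependent_explicit_finite[OF assms(1)] by blast
  obtain c where c: "\<forall>x\<in>B. 0 < c x" "(\<Sum>x\<in>B. c x *\<^sub>R x) = 0" using assms(2) unfolding pd_def by blast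
  define s where "s = d x / c x"
  define f where "f = (\<lambda>y. d y - s * c y)"
  have cx: "c x > 0" using c assms(3) by blast
  have fx: "f x = 0" using cx by (simp add: f_def s_def)
  have "(\<Sum>y\<in>B. f y *\<^sub>R y) = (\<Sum>y\<in>B. d y *\<^sub>R y) - s *\<^sub>R (\<Sum>y\<in>B. c y *\<^sub>R y)"
    by (simp add: f_def scaleR_diff_left sum_subtractf scaleR_sum_right)
  then have "(\<Sum>y\<in>B. f y *\<^sub>R y) = 0" using c d by simp
  moreover have "(\<Sum>y\<in>B. f y *\<^sub>R y) = f x *\<^sub>R x + (\<Sum>y\<in>B - {x}. f y *\<^sub>R y)"
    using assms(1,3) by (simp add: sum.remove)
  ultimately have "(\<Sum>y\<in>B - {x}. f y *\<^sub>R y) = 0" using fx by simp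
  then have f0: "\<forall>y\<in>B - {x}. f y = 0"
    using assms(4) dependent_finite[of "B - {x}"] assms(1) by auto
  then have "\<forall>y\<in>B. d y = s * c y" using fx by (auto simp: f_def)
  then have "sum d B = s * sum c B" by (simp add: sum_distrib_left)
  moreover have "sum c B > 0" using c assms(1,3) by (intro sum_pos) auto
  ultimately have "s = 0" using d(1) by simp
  then show False using d(2) \<open>\<forall>y\<in>B. d y = s * c y\<close> by auto
qed

lemma pos_rep:
  fixes V :: "'a::euclidean_space set"
  assumes "finite V" "pd V" "q \<in> span V"
  shows "\<exists>e. (\<forall>x\<in>V. 0 < e x) \<and> (\<Sum>x\<in>V. e x *\<^sub>R x) = q"
proof -
  obtain c where c: "\<forall>x\<in>V. 0 < c x" "(\<Sum>x\<in>V. c x *\<^sub>R x) = 0" using assms(2) unfolding pd_def by blast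
  obtain u where u: "(\<Sum>x\<in>V. u x *\<^sub>R x) = q" using assms(3) span_finite[OF assms(1)] by auto
  define M where "M = (\<Sum>x\<in>V. \<bar>u x\<bar> / c x) + 1"
  define e where "e = (\<lambda>x. u x + M * c x)"
  have "0 < e x" if x: "x \<in> V" for x
  proof -
    have cx: "c x > 0" using c x by blast
    have "\<bar>u x\<bar> / c x \<le> (\<Sum>x\<in>V. \<bar>u x\<bar> / c x)"
      using assms(1) x c by (intro member_le_sum) auto
    then have "\<bar>u x\<bar> / c x + 1 \<le> M" by (simp add: M_def)
    then have "(\<bar>u x\<bar> / c x + 1) * c x \<le> M * c x" using c x by (intro mult_right_mono) auto
    moreover have "c x > 0" using c x by blast
    then have "(\<bar>u x\<bar> / c x + 1) * c x = \<bar>u x\<bar> + c x" by (simp add: field_simps)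
    moreover have "- \<bar>u x\<bar> \<le> u x" by simp
    ultimately show ?thesis unfolding e_def using cx by linarith
  qed
  moreover have "(\<Sum>x\<in>V. e x *\<^sub>R x) = q"
  proof -
    have "(\<Sum>x\<in>V. (M * c x) *\<^sub>R x) = M *\<^sub>R (\<Sum>x\<in>V. c x *\<^sub>R x)" by (simp add: scaleR_sum_right)
    then have "(\<Sum>x\<in>V. (M * c x) *\<^sub>R x) = 0" using c by simp
    then show ?thesis using u by (simp add: e_def scaleR_add_left sum.distrib)
  qed
  ultimately show ?thesis by blast
qed

lemma reduce:
  fixes V :: "'a::euclidean_space set"
  assumes "finite V" "V \<noteq> {}" "\<forall>x\<in>V. 0 < c x" "(\<Sum>x\<in>V. c x *\<^sub>R x) = 0" "\<forall>x\<in>V. 0 < e x"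
  shows "\<exists>x0\<in>V. \<exists>e'. (\<forall>x\<in>V. 0 \<le> e' x) \<and> e' x0 = 0 \<and> (\<Sum>x\<in>V. e' x *\<^sub>R x) = (\<Sum>x\<in>V. e x *\<^sub>R x)"
proof -
  define t where "t = Min ((\<lambda>y. e y / c y) ` V)"
  have "t \<in> (\<lambda>y. e y / c y) ` V" unfolding t_def using assms by (intro Min_in) auto
  then obtain x0 where x0: "x0 \<in> V" "t = e x0 / c x0" by blast
  have tle: "\<And>y. y \<in> V \<Longrightarrow> t \<le> e y / c y" unfolding t_def using assms by (intro Min_le) auto
  define e' where "e' = (\<lambda>x. e x - t * c x)"
  have "\<forall>x\<in>V. 0 \<le> e' x"
  proof
    fix x assume x: "x \<in> V"
    have "t \<le> e x / c x" using tle x .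
    then have "t * c x \<le> e x" using assms(3) x by (subst (asm) le_divide_eq) auto
    then show "0 \<le> e' x" by (simp add: e'_def)
  qed
  moreover have "c x0 > 0" using x0 assms(3) by blast
  then have "e' x0 = 0" using x0 by (simp add: e'_def)
  moreover have "(\<Sum>x\<in>V. e' x *\<^sub>R x) = (\<Sum>x\<in>V. e x *\<^sub>R x)"
  proof -
    have "(\<Sum>x\<in>V. (t * c x) *\<^sub>R x) = t *\<^sub>R (\<Sum>x\<in>V. c x *\<^sub>R x)" by (simp add: scaleR_sum_right)
    then have "(\<Sum>x\<in>V. (t * c x) *\<^sub>R x) = 0" using assms(4) by simp
    then show ?thesis by (simp add: e'_def scaleR_diff_left sum_subtractf)
  qed
  ultimately show ?thesis using x0 by blast
qed

lemma sign_lemma: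
  fixes f c :: "'a \<Rightarrow> real"
  assumes "finite S" "\<forall>x\<in>S. 0 < c x" "(\<Sum>x\<in>S. c x * f x) = 0" "\<exists>x\<in>S. f x \<noteq> 0"
  shows "\<exists>x\<in>S. f x > 0"
proof (rule ccontr)
  assume "\<not> ?thesis"
  then have fn: "\<And>x. x \<in> S \<Longrightarrow> f x \<le> 0" by (simp add: not_less)
  have nn: "\<And>x. x \<in> S \<Longrightarrow> 0 \<le> - (c x * f x)"
  proof -
    fix x assume x: "x \<in> S"
    have "0 \<le> c x" using assms(2) x by (simp add: less_imp_le)
    then have "c x * f x \<le> 0" using fn[OF x] by (rule mult_nonneg_nonpos)
    then show "0 \<le> - (c x * f x)" by linarith
  qed
  have "(\<Sum>x\<in>S. - (c x * f x)) = 0" using assms(3) by (simp only: sum_negf)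
  then have all: "\<forall>x\<in>S. - (c x * f x) = 0"
    using sum_nonneg_eq_0_iff[OF assms(1), of "\<lambda>x. - (c x * f x)"] nn by blast
  obtain x where x: "x \<in> S" "f x \<noteq> 0" using assms(4) by blast
  have "c x \<noteq> 0" using assms(2) x by (simp add: less_imp_neq[symmetric])
  moreover have "- (c x * f x) = 0" using all x by blast
  ultimately show False using x by simp
qed

lemma not_span1:
  fixes B :: "'a::euclidean_space set"
  assumes "independent B" "a \<in> B" "b \<in> B" "a \<noteq> b"
  shows "a \<notin> span {b}"
proof
  assume "a \<in> span {b}"
  moreover have "span {b} \<subseteq> span (B - {a})" using assms by (intro span_mono) auto
  ultimately have "a \<in> span (B - {a})" by blast
  then show False using assms(1,2) unfolding dependent_def by blast
qed

lemma pair_disj: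
  fixes b b' :: "'a::euclidean_space"
  assumes "b \<notin> span {b'}" "b' \<notin> span {b}" "t > 0" "t' > 0" "p = (- t) *\<^sub>R b" "p' = (- t') *\<^sub>R b'"
  shows "{b, p} \<inter> {b', p'} = {}"
proof -
  have "b \<noteq> b'" using assms(1) span_base[of b' "{b'}"] by auto
  moreover have "b \<noteq> p'"
  proof
    assume "b = p'"
    then have "b = - (t' *\<^sub>R b')" using assms(6) by simp
    moreover have "- (t' *\<^sub>R b') \<in> span {b'}" by (intro span_neg span_mul span_base) simp
    ultimately have "b \<in> span {b'}" by simp
    then show False using assms(1) by blast
  qed
  moreover have "p \<noteq> b'"
  proof
    assume "p = b'"
    then have "b' = - (t *\<^sub>R b)" using assms(5) by simp
    moreover have "- (t *\<^sub>R b) \<in> span {b}" by (intro span_neg span_mul span_base) simp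
    ultimately have "b' \<in> span {b}" by simp
    then show False using assms(2) by blast
  qed
  moreover have "p \<noteq> p'"
  proof
    assume "p = p'"
    then have "t *\<^sub>R b = t' *\<^sub>R b'" using assms(5,6) by simp
    note eq = this
    have "b = (1 / t) *\<^sub>R (t *\<^sub>R b)" using assms(3) by simp
    also have "\<dots> = (1 / t) *\<^sub>R (t' *\<^sub>R b')" using eq by simp
    also have "\<dots> = (t' / t) *\<^sub>R b'" by simp
    finally have "b = (t' / t) *\<^sub>R b'" .
    moreover have "(t' / t) *\<^sub>R b' \<in> span {b'}" by (intro span_mul span_base) simp
    ultimately have "b \<in> span {b'}" by simp
    then show False using assms(1) by blast
  qed
  ultimately show ?thesis by blast
qed

lemma pair_crit:
  fixes b :: "'a::euclidean_space"
  assumes "b \<noteq> 0" "t > 0" "p = (- t) *\<^sub>R b"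
  shows "critical_simplex 1 {b, p}" "b \<noteq> p" "pd {b, p}"
proof -
  show bp: "b \<noteq> p"
  proof
    assume "b = p"
    then have "b = - (t *\<^sub>R b)" using assms(3) by simp
    then have "b + t *\<^sub>R b = 0" by (simp add: eq_neg_iff_add_eq_0)
    then have "(1 + t) *\<^sub>R b = 0" by (simp add: scaleR_add_left)
    then show False using assms(1,2) by simp
  qed
  show pd: "pd {b, p}" using pd2[OF bp assms(2), of 1] assms(3) by simp
  show "critical_simplex 1 {b, p}" using bp pd by (intro crit_intro) auto
qed

lemma caseC:
  fixes S :: "(real^3) set"
  assumes fin: "finite S" and pdS: "pd S" and spS: "span S = UNIV"
    and minS: "\<And>T. T \<subseteq> S \<Longrightarrow> pd T \<Longrightarrow> span T = UNIV \<Longrightarrow> T = S"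
    and z: "0 \<notin> S"
    and C: "\<forall>s\<in>S. \<exists>V\<subseteq>S. s \<in> V \<and> pd V \<and> card V = 2"
  shows "\<exists>A B C. critical_simplex 1 A \<and> critical_simplex 1 B \<and> critical_simplex 1 C
         \<and> A \<inter> B = {} \<and> A \<inter> C = {} \<and> B \<inter> C = {} \<and> S = A \<union> B \<union> C"
proof -
  have partner: "\<exists>p t. p \<in> S \<and> t > 0 \<and> p = (- t) *\<^sub>R b" if b: "b \<in> S" for b
  proof -
    obtain V where V: "V \<subseteq> S" "b \<in> V" "pd V" "card V = 2" using C b by blast
    have "\<exists>x y. V = {x, y} \<and> x \<noteq> y" by (rule iffD1[OF card_2_iff V(4)])
    then obtain x y where xy: "V = {x, y}" "x \<noteq> y" by blast
    obtain p where p: "V = {b, p}" "b \<noteq> p"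
    proof (cases "b = x")
      case True then show ?thesis using xy that[of y] by simp
    next
      case False then have "b = y" using xy V(2) by simp
      then show ?thesis using xy that[of x] by (simp add: insert_commute)
    qed
    obtain c where c: "\<forall>x\<in>V. 0 < c x" "(\<Sum>x\<in>V. c x *\<^sub>R x) = 0" using V(3) unfolding pd_def by blast
    have "c b *\<^sub>R b + c p *\<^sub>R p = 0" using c(2) p by simp
    then have eq: "c p *\<^sub>R p = - (c b *\<^sub>R b)" by (metis add.commute eq_neg_iff_add_eq_0)
    have cp: "c p > 0" "c b > 0" using c p by auto
    have "p = (1 / c p) *\<^sub>R (c p *\<^sub>R p)" using cp by simp
    also have "\<dots> = (1 / c p) *\<^sub>R (- (c b *\<^sub>R b))" using eq by simp
    also have "\<dots> = (- (c b / c p)) *\<^sub>R b" by simp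
    finally have "p = (- (c b / c p)) *\<^sub>R b" .
    moreover have "c b / c p > 0" using cp by simp
    ultimately show ?thesis using p V by blast
  qed
  obtain B where B: "B \<subseteq> S" "independent B" "S \<subseteq> span B" using maximal_independent_subset by blast
  have "span S \<subseteq> span B" using span_mono[OF B(3)] by (simp only: span_span)
  then have spB: "span B = UNIV" using spS by auto
  then have "dim B = DIM(real^3)" using dim_eq_full[of B] by blast
  then have "dim B = 3" by simp
  then have "card B = 3" using dim_eq_card_independent[OF B(2)] by simp
  then have "\<exists>x y z. B = {x,y,z} \<and> x \<noteq> y \<and> y \<noteq> z \<and> x \<noteq> z" by (rule iffD1[OF card_3_iff])
  then obtain b1 b2 b3 where bs: "B = {b1, b2, b3}" "b1 \<noteq> b2" "b2 \<noteq> b3" "b1 \<noteq> b3"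
    by blast
  have inS: "b1 \<in> S" "b2 \<in> S" "b3 \<in> S" using B(1) bs by auto
  obtain p1 t1 where 1: "p1 \<in> S" "t1 > 0" "p1 = (- t1) *\<^sub>R b1" using partner[OF inS(1)] by blast
  obtain p2 t2 where 2: "p2 \<in> S" "t2 > 0" "p2 = (- t2) *\<^sub>R b2" using partner[OF inS(2)] by blast
  obtain p3 t3 where 3: "p3 \<in> S" "t3 > 0" "p3 = (- t3) *\<^sub>R b3" using partner[OF inS(3)] by blast
  have ns: "b1 \<notin> span {b2}" "b2 \<notin> span {b1}" "b1 \<notin> span {b3}" "b3 \<notin> span {b1}"
     "b2 \<notin> span {b3}" "b3 \<notin> span {b2}"
    using not_span1[OF B(2)] bs by auto
  have d12: "{b1, p1} \<inter> {b2, p2} = {}" by (rule pair_disj[OF ns(1,2) 1(2) 2(2) 1(3) 2(3)])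
  have d13: "{b1, p1} \<inter> {b3, p3} = {}" by (rule pair_disj[OF ns(3,4) 1(2) 3(2) 1(3) 3(3)])
  have d23: "{b2, p2} \<inter> {b3, p3} = {}" by (rule pair_disj[OF ns(5,6) 2(2) 3(2) 2(3) 3(3)])
  have nz: "b1 \<noteq> 0" "b2 \<noteq> 0" "b3 \<noteq> 0" using z inS by auto
  note c1 = pair_crit[OF nz(1) 1(2,3)] and c2 = pair_crit[OF nz(2) 2(2,3)] and c3 = pair_crit[OF nz(3) 3(2,3)]
  define T where "T = {b1, p1} \<union> {b2, p2} \<union> {b3, p3}"
  have pab: "pd ({b1, p1} \<union> {b2, p2})" using pd_union[OF _ _ d12 c1(3) c2(3)] by simp
  have dd: "({b1, p1} \<union> {b2, p2}) \<inter> {b3, p3} = {}" using d13 d23 by blast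
  have "pd T" unfolding T_def by (rule pd_union[OF _ _ dd pab c3(3)]) auto
  moreover have "span T = UNIV"
  proof -
    have "B \<subseteq> T" using bs by (auto simp: T_def)
    then have "span B \<subseteq> span T" by (rule span_mono)
    then show ?thesis using spB by auto
  qed
  moreover have "T \<subseteq> S" using inS 1 2 3 by (simp add: T_def)
  ultimately have TS: "T = S" using minS by simp
  show ?thesis
    apply (rule exI[of _ "{b1,p1}"], rule exI[of _ "{b2,p2}"], rule exI[of _ "{b3,p3}"])
    using c1(1) c2(1) c3(1) d12 d13 d23 TS unfolding T_def by simp
qed

lemma dim_pd:
  fixes V :: "'a::euclidean_space set"
  assumes "finite V" "pd V" "\<not> affine_dependent V" "v \<in> V"
  shows "dim V = card V - 1"
proof -
  note im = indep_minus[OF assms]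
  have "dim V = dim (span V)" by simp
  also have "\<dots> = dim (span (V - {v}))" using im(2) by simp
  also have "\<dots> = card (V - {v})" using dim_eq_card_independent[OF im(1)] by simp
  also have "\<dots> = card V - 1" using assms(1,4) by simp
  finally show ?thesis .
qed

lemma caseA:
  fixes S :: "(real^3) set"
  assumes fin: "finite S"
    and minS: "\<And>T. T \<subseteq> S \<Longrightarrow> pd T \<Longrightarrow> span T = UNIV \<Longrightarrow> T = S"
    and V: "V \<subseteq> S" "pd V" "\<not> affine_dependent V" "card V = 4"
  shows "critical_simplex 3 S"
proof -
  have fV: "finite V" using V(1) fin finite_subset by blast
  have "V \<noteq> {}" using V(4) by auto
  then obtain v where v: "v \<in> V" by blast
  have "dim V = 3" using dim_pd[OF fV V(2,3) v] V(4) by simp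
  then have "dim V = DIM(real^3)" by simp
  then have "span V = UNIV" using dim_eq_full by blast
  then have "V = S" using minS V by blast
  then show ?thesis using crit_intro[of V 3] fV V by simp
qed

lemma caseB:
  fixes S :: "(real^3) set"
  assumes fin: "finite S" and pdS: "pd S" and spS: "span S = UNIV"
    and minS: "\<And>T. T \<subseteq> S \<Longrightarrow> pd T \<Longrightarrow> span T = UNIV \<Longrightarrow> T = S"
    and z0: "0 \<notin> S"
    and V: "V \<subseteq> S" "pd V" "\<not> affine_dependent V" "card V = 3"
  shows "(\<exists>A B. critical_simplex 2 A \<and> critical_simplex 2 B \<and> card (A \<inter> B) = 1 \<and> S = A \<union> B)
    \<or> (\<exists>A B. critical_simplex 2 A \<and> critical_simplex 1 B \<and> A \<inter> B = {} \<and> S = A \<union> B)"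
proof -
  have fV: "finite V" using V(1) fin finite_subset by blast
  have "V \<noteq> {}" using V(4) by auto
  then obtain v0 where v0: "v0 \<in> V" by blast
  have dV: "dim V = 2" using dim_pd[OF fV V(2,3) v0] V(4) by simp
  have critV: "critical_simplex 2 V" using crit_intro[of V 2] fV V by simp
  obtain c where c: "\<forall>x\<in>V. 0 < c x" "(\<Sum>x\<in>V. c x *\<^sub>R x) = 0" using V(2) unfolding pd_def by blast
  obtain cS where cS: "\<forall>x\<in>S. 0 < cS x" "(\<Sum>x\<in>S. cS x *\<^sub>R x) = 0" using pdS unfolding pd_def by blast
  have "dim V < DIM(real^3)" using dV by simp
  then obtain w :: "real^3" where w: "w \<noteq> 0" "\<And>y. y \<in> span V \<Longrightarrow> orthogonal w y"
    using orthogonal_to_subspace_exists by blast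
  have wV: "\<And>y. y \<in> span V \<Longrightarrow> w \<bullet> y = 0" using w(2) unfolding orthogonal_def by blast
  have ex: "\<exists>x\<in>S. w \<bullet> x \<noteq> 0"
  proof (rule ccontr)
    assume "\<not> ?thesis"
    then have "\<And>y. y \<in> S \<Longrightarrow> orthogonal w y" unfolding orthogonal_def by blast
    then have "orthogonal w w" using orthogonal_to_span[of w S w] spS by blast
    then show False using w(1) unfolding orthogonal_def by simp
  qed
  have sumw: "(\<Sum>x\<in>S. cS x * (w \<bullet> x)) = 0"
  proof -
    have "(\<Sum>x\<in>S. cS x * (w \<bullet> x)) = w \<bullet> (\<Sum>x\<in>S. cS x *\<^sub>R x)" by (simp add: inner_sum_right)
    then show ?thesis using cS by simp
  qed
  obtain a where a: "a \<in> S" "w \<bullet> a > 0" using sign_lemma[OF fin cS(1) sumw ex] by blast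
  have sumw2: "(\<Sum>x\<in>S. cS x * (- (w \<bullet> x))) = 0" using sumw by (simp add: sum_negf)
  have ex2: "\<exists>x\<in>S. - (w \<bullet> x) \<noteq> 0" using ex by simp
  obtain b where b: "b \<in> S" "w \<bullet> b < 0" using sign_lemma[OF fin cS(1) sumw2 ex2] by auto
  have aV: "a \<notin> span V" using wV a(2) by force
  have bV: "b \<notin> span V" using wV b(2) by force
  have aV': "a \<notin> V" "b \<notin> V" using aV bV span_base by auto
  have ab: "a \<noteq> b" using a b by auto
  have "dim (insert a V) = 3" using dV aV by (simp add: dim_insert)
  then have "dim (insert a V) = DIM(real^3)" by simp
  then have spaV: "span (insert a V) = UNIV" using dim_eq_full by blast
  define \<alpha> where "\<alpha> = - (w \<bullet> b)"
  define \<beta> where "\<beta> = w \<bullet> a"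
  have al: "\<alpha> > 0" "\<beta> > 0" using a b by (auto simp: \<alpha>_def \<beta>_def)
  define z where "z = \<alpha> *\<^sub>R a + \<beta> *\<^sub>R b"
  have "b \<in> span (insert a V)" using spaV by simp
  then obtain k where k: "b - k *\<^sub>R a \<in> span V" using span_breakdown_eq by blast
  define p where "p = b - k *\<^sub>R a"
  have "w \<bullet> p = 0" using wV k by (simp add: p_def)
  then have "w \<bullet> b = k * (w \<bullet> a)" by (simp add: p_def inner_diff_right)
  then have "\<alpha> + \<beta> * k = 0" by (simp add: \<alpha>_def \<beta>_def)
  moreover have "z = (\<alpha> + \<beta> * k) *\<^sub>R a + \<beta> *\<^sub>R p" by (simp add: z_def p_def algebra_simps)
  ultimately have "z = \<beta> *\<^sub>R p" by simp
  then have zV: "z \<in> span V" using k by (simp add: p_def span_mul)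
  then have "- z \<in> span V" by (rule span_neg)
  then obtain e where e: "\<forall>x\<in>V. 0 < e x" "(\<Sum>x\<in>V. e x *\<^sub>R x) = - z" using pos_rep[OF fV V(2)] by blast
  define cab where "cab = (\<lambda>x. if x = a then \<alpha> else \<beta>)"
  have sab: "(\<Sum>x\<in>{a,b}. cab x *\<^sub>R x) = z" using ab by (simp add: cab_def z_def)
  have cabp: "\<forall>x\<in>{a,b}. 0 < cab x" using al by (simp add: cab_def)
  have dVab: "V \<inter> {a, b} = {}" using aV' by auto
  have SVab: "S = V \<union> {a, b}"
  proof -
    have "pd (V \<union> {a, b})" using pd_comb[OF fV _ dVab e(1) cabp] e(2) sab by simp
    moreover have "span (V \<union> {a, b}) = UNIV"
    proof -
      have "insert a V \<subseteq> V \<union> {a, b}" by auto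
      then have "span (insert a V) \<subseteq> span (V \<union> {a, b})" by (rule span_mono)
      then show ?thesis using spaV by auto
    qed
    moreover have "V \<union> {a, b} \<subseteq> S" using V(1) a b by auto
    ultimately show ?thesis using minS by metis
  qed
  obtain x0 e' where x0: "x0 \<in> V" "\<forall>x\<in>V. 0 \<le> e' x" "e' x0 = 0" "(\<Sum>x\<in>V. e' x *\<^sub>R x) = - z"
    using reduce[OF fV \<open>V \<noteq> {}\<close> c e(1)] e(2) by auto
  have "card (V - {x0}) = 2" using V(4) x0(1) fV by simp
  then have "\<exists>x y. V - {x0} = {x, y} \<and> x \<noteq> y" by (rule iffD1[OF card_2_iff])
  then obtain n1 n2 where nn: "V - {x0} = {n1, n2}" "n1 \<noteq> n2" by blast
  have Veq: "V = insert x0 {n1, n2}" using nn(1) x0(1) by blast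
  have x0n: "x0 \<notin> {n1, n2}" using nn(1) by blast
  have nV: "n1 \<in> V" "n2 \<in> V" using Veq by auto
  have "(\<Sum>x\<in>V. e' x *\<^sub>R x) = e' x0 *\<^sub>R x0 + (\<Sum>x\<in>{n1,n2}. e' x *\<^sub>R x)"
    unfolding Veq by (rule sum.insert) (use x0n in auto)
  then have mu: "e' n1 *\<^sub>R n1 + e' n2 *\<^sub>R n2 = - z" using x0(3,4) nn(2) by simp
  have mu0: "e' n1 \<ge> 0" "e' n2 \<ge> 0" using x0(2) nV by auto
  have rel: "\<alpha> *\<^sub>R a + \<beta> *\<^sub>R b + (e' n1 *\<^sub>R n1 + e' n2 *\<^sub>R n2) = 0" using mu by (simp add: z_def)
  have tri: "\<exists>A B. critical_simplex 2 A \<and> critical_simplex 2 B \<and> card (A \<inter> B) = 1 \<and> S = A \<union> B"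
    if m: "m \<in> V" "\<mu> > 0" "\<alpha> *\<^sub>R a + \<beta> *\<^sub>R b + \<mu> *\<^sub>R m = 0" for m \<mu>
  proof -
    have am: "a \<noteq> m" "b \<noteq> m" using aV' m(1) by auto
    have pdB: "pd {a, b, m}" using pd3[OF ab am al m(2) m(3)] .
    have "m \<noteq> 0" using z0 m(1) V(1) by auto
    moreover have "a \<notin> span {m}"
    proof
      assume "a \<in> span {m}"
      moreover have "span {m} \<subseteq> span V" using m(1) by (intro span_mono) auto
      ultimately show False using aV by blast
    qed
    ultimately have "independent {a, m}" using am by (simp add: independent_insert)
    moreover have "{a, b, m} - {b} = {a, m}" using ab am by auto
    ultimately have "\<not> affine_dependent {a, b, m}" using aff_indep_of[OF _ pdB, of b] by simp
    moreover have "card {a, b, m} = 3" using ab am by simp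
    ultimately have critB: "critical_simplex 2 {a, b, m}" using pdB by (intro crit_intro) auto
    have "V \<inter> {a, b, m} = {m}" using aV' m(1) by auto
    moreover have "S = V \<union> {a, b, m}" using SVab m(1) by auto
    ultimately show ?thesis using critV critB by (intro exI[of _ V] exI[of _ "{a, b, m}"]) simp
  qed
  show ?thesis
  proof (cases "z = 0")
    case True
    have "pd {a, b}" using pd2[OF ab al] True by (simp add: z_def)
    then have "critical_simplex 1 {a, b}" using ab by (intro crit_intro) auto
    then show ?thesis using critV dVab SVab by blast
  next
    case False
    show ?thesis
    proof (cases "e' n1 > 0 \<and> e' n2 > 0")
      case True
      define cn where "cn = (\<lambda>x. if x = n1 then e' n1 else e' n2)"
      have sn: "(\<Sum>x\<in>{n1,n2}. cn x *\<^sub>R x) = - z" using nn(2) mu by (simp add: cn_def)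
      have cnp: "\<forall>x\<in>{n1,n2}. 0 < cn x" using True by (simp add: cn_def)
      have dd: "{a, b} \<inter> {n1, n2} = {}" using aV' nV by auto
      define T where "T = {a, b} \<union> {n1, n2}"
      have "pd T" unfolding T_def using pd_comb[OF _ _ dd cabp cnp] sab sn by simp
      moreover have "span T = UNIV"
      proof -
        have "span {n1, n2} = span V" using indep_minus(2)[OF fV V(2,3) x0(1)] nn(1) by simp
        then have "V \<subseteq> span {n1, n2}" using span_superset by blast
        moreover have "span {n1, n2} \<subseteq> span T" by (rule span_mono) (auto simp: T_def)
        moreover have "a \<in> span T" by (rule span_base) (simp add: T_def)
        ultimately have "insert a V \<subseteq> span T" by blast
        then have "span (insert a V) \<subseteq> span T" using span_mono[of "insert a V" "span T"] by (simp only: span_span)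
        then show ?thesis using spaV by auto
      qed
      moreover have "T \<subseteq> S" using a b nV V(1) by (auto simp: T_def)
      ultimately have "T = S" using minS by metis
      moreover have "x0 \<notin> T" using aV' x0(1) x0n by (auto simp: T_def)
      ultimately show ?thesis using x0(1) V(1) by blast
    next
      case False
      then have "e' n1 = 0 \<or> e' n2 = 0" using mu0 by auto
      then show ?thesis
      proof
        assume h: "e' n1 = 0"
        then have "e' n2 \<noteq> 0" using mu \<open>z \<noteq> 0\<close> by auto
        then have "e' n2 > 0" using mu0 by simp
        moreover have "\<alpha> *\<^sub>R a + \<beta> *\<^sub>R b + e' n2 *\<^sub>R n2 = 0" using rel h by simp
        ultimately show ?thesis using tri[OF nV(2)] by blast
      next
        assume h: "e' n2 = 0"
        then have "e' n1 \<noteq> 0" using mu \<open>z \<noteq> 0\<close> by auto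
        then have "e' n1 > 0" using mu0 by simp
        moreover have "\<alpha> *\<^sub>R a + \<beta> *\<^sub>R b + e' n1 *\<^sub>R n1 = 0" using rel h by simp
        ultimately show ?thesis using tri[OF nV(1)] by blast
      qed
    qed
  qed
qed

theorem lemma20:
  fixes S :: "(real^3) set"
  assumes "finite S" and "minimally_surrounds S"
  shows "critical_simplex 3 S
    \<or> (\<exists>A B. critical_simplex 2 A \<and> critical_simplex 2 B \<and> card (A \<inter> B) = 1 \<and> S = A \<union> B)
    \<or> (\<exists>A B. critical_simplex 2 A \<and> critical_simplex 1 B \<and> A \<inter> B = {} \<and> S = A \<union> B)
    \<or> (\<exists>A B C. critical_simplex 1 A \<and> critical_simplex 1 B \<and> critical_simplex 1 C
         \<and> A \<inter> B = {} \<and> A \<inter> C = {} \<and> B \<inter> C = {} \<and> S = A \<union> B \<union> C)"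
proof -
  have fin: "finite S" by fact
  have sr: "surrounds S" and minT: "\<And>T. T \<subset> S \<Longrightarrow> \<not> surrounds T"
    using assms(2) unfolding minimally_surrounds_def by auto
  have spS: "span S = UNIV" and pdS: "pd S" using sr surr_iff[OF fin] by auto
  have minS: "T = S" if T: "T \<subseteq> S" "pd T" "span T = UNIV" for T
  proof (rule ccontr)
    assume "T \<noteq> S"
    then have "T \<subset> S" using T(1) by blast
    moreover have "finite T" using T(1) fin finite_subset by blast
    moreover have "surrounds T" using surr_iff[OF \<open>finite T\<close>] T(2,3) by simp
    ultimately show False using minT by blast
  qed
  have z0: "0 \<notin> S"
  proof
    assume z: "0 \<in> S"
    define T where "T = S - {0}"
    have "span (insert 0 T) = span T" by (rule span_redundant) (rule span_zero)
    moreover have "insert 0 T = S" using z by (auto simp: T_def)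
    ultimately have "span T = UNIV" using spS by simp
    moreover have "pd T"
    proof -
      obtain c where c: "\<forall>x\<in>S. 0 < c x" "(\<Sum>x\<in>S. c x *\<^sub>R x) = 0" using pdS unfolding pd_def by blast
      have "(\<Sum>x\<in>S. c x *\<^sub>R x) = c 0 *\<^sub>R 0 + (\<Sum>x\<in>T. c x *\<^sub>R x)"
        unfolding T_def using fin z by (rule sum.remove)
      then have "(\<Sum>x\<in>T. c x *\<^sub>R x) = 0" using c by simp
      moreover have "\<forall>x\<in>T. 0 < c x" using c by (auto simp: T_def)
      ultimately show ?thesis unfolding pd_def by blast
    qed
    moreover have "T \<subseteq> S" by (auto simp: T_def)
    ultimately have "T = S" using minS by blast
    then show False using z by (auto simp: T_def)
  qed
  have cards: "\<exists>V\<subseteq>S. s \<in> V \<and> pd V \<and> \<not> affine_dependent V \<and> 2 \<le> card V \<and> card V \<le> 4"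
    if s: "s \<in> S" for s
  proof -
    obtain V where V: "V \<subseteq> S" "s \<in> V" "pd V" "\<not> affine_dependent V" using circ[OF fin pdS s] by blast
    have fV: "finite V" using V(1) fin finite_subset by blast
    have "card V \<le> 4"
    proof (rule ccontr)
      assume "\<not> card V \<le> 4"
      then have "card V \<ge> DIM(real^3) + 2" by simp
      then show False using affine_dependent_biggerset[OF fV] V(4) by blast
    qed
    moreover have "card V \<ge> 2"
    proof (rule ccontr)
      assume "\<not> card V \<ge> 2"
      moreover have "card V \<noteq> 0" using fV V(2) by auto
      ultimately have "card V = 1" by simp
      then obtain x where "V = {x}" by (rule card_1_singletonE)
      then have Vs: "V = {s}" using V(2) by simp
      obtain c where c: "\<forall>x\<in>V. 0 < c x" "(\<Sum>x\<in>V. c x *\<^sub>R x) = 0" using V(3) unfolding pd_def by blast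
      have "c s *\<^sub>R s = 0" using c(2) Vs by simp
      moreover have "c s \<noteq> 0" using c(1) Vs by auto
      ultimately have "s = 0" by simp
      then show False using z0 s by simp
    qed
    ultimately show ?thesis using V by (intro exI[of _ V]) simp
  qed
  show ?thesis
  proof (cases "\<exists>V\<subseteq>S. pd V \<and> \<not> affine_dependent V \<and> card V = 4")
    case True
    then obtain V where V: "V \<subseteq> S" "pd V" "\<not> affine_dependent V" "card V = 4" by blast
    have "critical_simplex 3 S" by (rule caseA[OF fin minS V])
    then show ?thesis by (rule disjI1)
  next
    case F4: False
    show ?thesis
    proof (cases "\<exists>V\<subseteq>S. pd V \<and> \<not> affine_dependent V \<and> card V = 3")
      case True
      then obtain V where V: "V \<subseteq> S" "pd V" "\<not> affine_dependent V" "card V = 3" by blast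
      note h = caseB[OF fin pdS spS minS z0 V]
      show ?thesis
        using h by blast
    next
      case F3: False
      have CC: "\<forall>s\<in>S. \<exists>V\<subseteq>S. s \<in> V \<and> pd V \<and> card V = 2"
      proof
        fix s assume s: "s \<in> S"
        obtain V where V: "V \<subseteq> S" "s \<in> V" "pd V" "\<not> affine_dependent V" "2 \<le> card V" "card V \<le> 4"
          using cards[OF s] by blast
        have "card V \<noteq> 4" using F4 V by blast
        moreover have "card V \<noteq> 3" using F3 V by blast
        ultimately have "card V = 2" using V(5,6) by simp
        then show "\<exists>V\<subseteq>S. s \<in> V \<and> pd V \<and> card V = 2" using V by blast
      qed
      show ?thesis by (rule disjI2, rule disjI2, rule disjI2, rule caseC[OF fin pdS spS minS z0 CC])
    qed
  qed
qed

end
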